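(* For $n\ge 2$ and all integers $k$, $$P^+(n+1,k)=(k+1)P^+(n,k)+(n-2k)P^+(n,k-1)+P^-(n,k),$$ $$P^-(n+1,k)=(k+1)P^-(n,k)+(n-2k+1)P^-(n,k-1)+P^+(n,k-1).$$ Equivalently, $$P_{n+1}^+(x)=((n-2)x+1)P_n^+(x)+x(1-2x)\tfrac{d}{dx}P_n^+(x)+P_n^-(x),$$ $$P_{n+1}^-(x)=((n-1)x+1)P_n^-(x)+x(1-2x)\tfrac{d}{dx}P_n^-(x)+xP_n^+(x).$$
   Context: For a permutation $\pi$ of $[n]=\{1,\dots,n\}$, a double descent is an index $i\in[n-2]$ with $\pi(i)>\pi(i+1)>\pi(i+2)$; $\pi$ is simsun if for every $k\in[n]$ the subword of $\pi$ consisting of the letters in $[k]$ (in order of appearance) has no double descents. Let $\mathcal{RS}_n$ be the set of simsun permutations of $[n]$, $\mathcal{RS}_n^+=\{\pi\in\mathcal{RS}_n:\pi(1)>\pi(2)\}$, $\mathcal{RS}_n^-=\{\pi\in\mathcal{RS}_n:\pi(1)<\pi(2)\}$. An interior peak of $\pi$ is an index $i\in\{2,\dots,n-1\}$ with $\pi(i-1)<\pi(i)>\pi(i+1)$, and ${\rm pk}(\pi)$ is their number. Let $P^{\pm}(n,k)=\#\{\pi\in\mathcal{RS}_n^{\pm}:{\rm pk}(\pi)=k\}$ and $P_n^{\pm}(x)=\sum_k P^{\pm}(n,k)x^k$ (with $P^\pm(n,k)=0$ for $k<0$). *)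

theory Defs
  imports "HOL-Computational_Algebra.Polynomial"
begin

text \<open>A permutation of [n] is represented as the list of its values
  [pi(1), ..., pi(n)]; list position j (0-based) holds pi(j+1).\<close>

definition is_perm :: "nat \<Rightarrow> nat list \<Rightarrow> bool" where
  "is_perm n xs \<longleftrightarrow> distinct xs \<and> set xs = {1..n}"

definition has_double_descent :: "nat list \<Rightarrow> bool" where
  "has_double_descent xs \<longleftrightarrow>
     (\<exists>i. i + 2 < length xs \<and> xs ! i > xs ! (i+1) \<and> xs ! (i+1) > xs ! (i+2))"

definition simsun :: "nat \<Rightarrow> nat list \<Rightarrow> bool" where
  "simsun n xs \<longleftrightarrow> (\<forall>k\<in>{1..n}. \<not> has_double_descent (filter (\<lambda>x. x \<le> k) xs))"

definition RS :: "nat \<Rightarrow> nat list set" where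
  "RS n = {xs. is_perm n xs \<and> simsun n xs}"

definition RS_plus :: "nat \<Rightarrow> nat list set" where
  "RS_plus n = {xs \<in> RS n. xs ! 0 > xs ! 1}"

definition RS_minus :: "nat \<Rightarrow> nat list set" where
  "RS_minus n = {xs \<in> RS n. xs ! 0 < xs ! 1}"

text \<open>Interior peaks: 1-based index i in {2..n-1}, i.e. 0-based j with 1 \<le> j, j+1 < n.\<close>
definition pk :: "nat list \<Rightarrow> nat" where
  "pk xs = card {j. 1 \<le> j \<and> j + 1 < length xs \<and> xs ! (j-1) < xs ! j \<and> xs ! j > xs ! (j+1)}"

definition Pplus :: "nat \<Rightarrow> int \<Rightarrow> int" where
  "Pplus n k = int (card {xs \<in> RS_plus n. int (pk xs) = k})"

definition Pminus :: "nat \<Rightarrow> int \<Rightarrow> int" where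
  "Pminus n k = int (card {xs \<in> RS_minus n. int (pk xs) = k})"

text \<open>Generating polynomials (pk of a permutation of [n] is below n).\<close>
definition Pplus_poly :: "nat \<Rightarrow> int poly" where
  "Pplus_poly n = (\<Sum>k\<le>n. monom (Pplus n (int k)) k)"

definition Pminus_poly :: "nat \<Rightarrow> int poly" where
  "Pminus_poly n = (\<Sum>k\<le>n. monom (Pminus n (int k)) k)"

end

theory Submission imports Defs begin

definition ins :: "nat \<Rightarrow> nat \<Rightarrow> nat list \<Rightarrow> nat list" where
  "ins N s xs = take s xs @ N # drop s xs"

definition slots :: "nat list \<Rightarrow> nat set" where
  "slots xs = {s. s \<le> length xs \<and> (s+1 < length xs \<longrightarrow> xs!s < xs!(s+1))}"

definition peaks :: "nat list \<Rightarrow> nat set" where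
  "peaks xs = {j. 1 \<le> j \<and> j + 1 < length xs \<and> xs ! (j-1) < xs ! j \<and> xs ! j > xs ! (j+1)}"

lemma pk_peaks: "pk xs = card (peaks xs)" by (simp add: pk_def peaks_def)

lemma ins_length[simp]: "s \<le> length xs \<Longrightarrow> length (ins N s xs) = Suc (length xs)"
  by (simp add: ins_def)

lemma ins_nth: "s \<le> length xs \<Longrightarrow> j \<le> length xs \<Longrightarrow>
  ins N s xs ! j = (if j < s then xs!j else if j = s then N else xs!(j-1))"
  by (auto simp: ins_def nth_append nth_Cons' min_def)

lemma set_ins[simp]: "set (ins N s xs) = insert N (set xs)"
proof -
  have "set xs = set (take s xs) \<union> set (drop s xs)"
    by (metis append_take_drop_id set_append)
  then show ?thesis by (auto simp: ins_def)
qed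

lemma distinct_ins: "distinct xs \<Longrightarrow> N \<notin> set xs \<Longrightarrow> distinct (ins N s xs)"
proof -
  assume a: "distinct xs" "N \<notin> set xs"
  have "distinct (take s xs @ drop s xs)" using a by simp
  moreover have "N \<notin> set (take s xs)" "N \<notin> set (drop s xs)" using a
    by (meson in_set_takeD in_set_dropD)+
  moreover have "set (take s xs) \<inter> set (drop s xs) = {}"
    using \<open>distinct (take s xs @ drop s xs)\<close> by (simp only: distinct_append)
  ultimately show ?thesis by (auto simp: ins_def)
qed

lemma filter_ins: "\<not> P N \<Longrightarrow> filter P (ins N s xs) = filter P xs"
proof -
  assume "\<not> P N"
  then have "filter P (ins N s xs) = filter P (take s xs) @ filter P (drop s xs)" by (simp add: ins_def)
  also have "\<dots> = filter P (take s xs @ drop s xs)" by (simp only: filter_append)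
  finally show ?thesis by (simp only: append_take_drop_id)
qed

lemma dd_ins:
  assumes lt: "\<forall>x\<in>set xs. x < N" and s: "s \<le> length xs"
    and nd: "\<not> has_double_descent xs"
  shows "has_double_descent (ins N s xs) \<longleftrightarrow> (s+1 < length xs \<and> xs!s > xs!(s+1))"
proof
  assume "s+1 < length xs \<and> xs!s > xs!(s+1)"
  then have "ins N s xs ! s > ins N s xs ! (s+1) \<and> ins N s xs ! (s+1) > ins N s xs ! (s+2)"
    using s lt by (auto simp: ins_nth)
  moreover have "s + 2 < length (ins N s xs)" using \<open>s+1 < length xs \<and> _\<close> s by simp
  ultimately show "has_double_descent (ins N s xs)" unfolding has_double_descent_def by blast
next
  assume "has_double_descent (ins N s xs)"
  then obtain i where i: "i + 2 < Suc (length xs)" "ins N s xs ! i > ins N s xs ! (i+1)"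
     "ins N s xs ! (i+1) > ins N s xs ! (i+2)" unfolding has_double_descent_def using s by auto
  have e: "ins N s xs ! i = (if i < s then xs!i else if i = s then N else xs!(i-1))"
      "ins N s xs ! (i+1) = (if i+1 < s then xs!(i+1) else if i+1 = s then N else xs!i)"
      "ins N s xs ! (i+2) = (if i+2 < s then xs!(i+2) else if i+2 = s then N else xs!(i+1))"
    using i(1) s by (auto simp: ins_nth)
  have lti: "\<And>j. j < length xs \<Longrightarrow> xs!j < N" using lt by auto
  consider "i + 2 < s" | "i + 2 = s" | "i+1 = s" | "i = s" | "i > s" by linarith
  then show "s+1 < length xs \<and> xs!s > xs!(s+1)"
  proof cases
    case 1 then have "has_double_descent xs" using i e s unfolding has_double_descent_def
      by (intro exI[of _ i]) auto
    then show ?thesis using nd by blast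
  next
    case 2 then show ?thesis using i e lti[of "i+1"] by auto
  next
    case 3 then show ?thesis using i e lti[of "i"] by auto
  next
    case 4 then show ?thesis using i e by auto
  next
    case 5 then have "has_double_descent xs" using i e unfolding has_double_descent_def
      by (intro exI[of _ "i-1"]) auto
    then show ?thesis using nd by blast
  qed
qed

lemma peaks_ins_mem:
  assumes lt: "\<forall>x\<in>set xs. x < N" and s: "s \<in> slots xs"
  shows "j \<in> peaks (ins N s xs) \<longleftrightarrow>
    (j+1<s \<and> j\<in>peaks xs) \<or> (j = s \<and> 1\<le>s \<and> s<length xs) \<or> (s+1<j \<and> j-1 \<in> peaks xs)"
proof (cases "j+1 \<le> length xs")
  case False
  then show ?thesis using s by (auto simp: peaks_def slots_def)
next
  case True
  have sl: "s \<le> length xs" using s by (simp add: slots_def)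
  have lti: "\<And>j. j < length xs \<Longrightarrow> xs!j < N" using lt by auto
  have e: "ins N s xs ! (j-1) = (if j-1 < s then xs!(j-1) else if j-1 = s then N else xs!(j-1-1))"
      "ins N s xs ! j = (if j < s then xs!j else if j = s then N else xs!(j-1))"
      "ins N s xs ! (j+1) = (if j+1 < s then xs!(j+1) else if j+1 = s then N else xs!j)"
    using True sl by (auto simp: ins_nth)
  consider "j+1<s" | "j+1=s" | "j=s" | "j=s+1" | "j > s+1" by linarith
  then show ?thesis
  proof cases
    case 1 then show ?thesis using e True sl by (auto simp: peaks_def)
  next
    case 2 then show ?thesis using e True sl lti[of j] by (auto simp: peaks_def)
  next
    case 3 then show ?thesis using e True sl lti[of "j-1"] lti[of "j"] s
      by (auto simp: peaks_def slots_def)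
  next
    case 4 then show ?thesis using e True sl lti[of "j-1"] lti[of "s"] s
      by (auto simp: peaks_def slots_def)
  next
    case 5
    show ?thesis using e True sl 5 by (auto simp: peaks_def)
  qed
qed

lemma peaks_ins:
  assumes lt: "\<forall>x\<in>set xs. x < N" and s: "s \<in> slots xs"
  shows "peaks (ins N s xs) = {j\<in>peaks xs. j+1<s} \<union> (if 1 \<le> s \<and> s < length xs then {s} else {})
     \<union> Suc ` {j\<in>peaks xs. s<j}"
proof (rule set_eqI)
  fix j
  have "j \<in> Suc ` {j\<in>peaks xs. s<j} \<longleftrightarrow> (s+1<j \<and> j-1 \<in> peaks xs)"
  proof
    assume "j \<in> Suc ` {j\<in>peaks xs. s<j}" then show "s+1<j \<and> j-1 \<in> peaks xs" by auto
  next
    assume "s+1<j \<and> j-1 \<in> peaks xs"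
    then have "j = Suc (j-1)" "s < j-1" "j-1 \<in> peaks xs" by auto
    then show "j \<in> Suc ` {j\<in>peaks xs. s<j}" by blast
  qed
  then show "j \<in> peaks (ins N s xs) \<longleftrightarrow> j \<in> {j\<in>peaks xs. j+1<s} \<union> (if 1 \<le> s \<and> s < length xs then {s} else {})
     \<union> Suc ` {j\<in>peaks xs. s<j}"
    using peaks_ins_mem[OF lt s, of j] by auto
qed

lemma finite_peaks[simp]: "finite (peaks xs)"
  by (rule finite_subset[of _ "{..<length xs}"]) (auto simp: peaks_def)

lemma slot_not_peak: "s \<in> slots xs \<Longrightarrow> s \<notin> peaks xs"
  by (auto simp: slots_def peaks_def)

lemma pk_ins:
  assumes lt: "\<forall>x\<in>set xs. x < N" and s: "s \<in> slots xs"
  shows "pk (ins N s xs) + (if 1\<le>s \<and> s-1 \<in> peaks xs then 1 else 0)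
       = pk xs + (if 1\<le>s \<and> s<length xs then 1 else 0)"
proof -
  define P where "P = peaks xs"
  define A1 where "A1 = {j\<in>P. j+1<s}"
  define A3 where "A3 = {j\<in>P. s<j}"
  define M where "M = {j\<in>P. j+1 = s}"
  define C where "C = (if 1 \<le> s \<and> s < length xs then {s} else {})"
  have fin: "finite A1" "finite A3" "finite M" "finite C" "finite P"
    by (auto simp: A1_def A3_def M_def C_def P_def)
  have "peaks (ins N s xs) = A1 \<union> C \<union> Suc ` A3"
    using peaks_ins[OF lt s] by (simp add: A1_def A3_def C_def P_def)
  moreover have "A1 \<inter> C = {}" "(A1 \<union> C) \<inter> Suc ` A3 = {}"
    by (auto simp: A1_def A3_def C_def)
  ultimately have c1: "pk (ins N s xs) = card A1 + card C + card A3"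
    using fin by (simp add: pk_peaks card_Un_disjoint card_image)
  have ns: "\<forall>x\<in>P. x \<noteq> s" using slot_not_peak[OF s] by (auto simp: P_def)
  have "P = A1 \<union> M \<union> A3" 
  proof (rule set_eqI)
    fix x show "x \<in> P \<longleftrightarrow> x \<in> A1 \<union> M \<union> A3"
      using ns by (cases "x < s") (auto simp: A1_def A3_def M_def)
  qed
  moreover have "A1 \<inter> M = {}" "(A1 \<union> M) \<inter> A3 = {}"
    by (auto simp: A1_def A3_def M_def)
  ultimately have c2: "pk xs = card A1 + card M + card A3"
    using fin by (simp add: pk_peaks card_Un_disjoint P_def[symmetric])
  have "M = (if 1\<le>s \<and> s-1 \<in> P then {s-1} else {})"
    by (auto simp: M_def)
  then have "card M = (if 1\<le>s \<and> s-1 \<in> P then 1 else 0)" by simp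
  moreover have "card C = (if 1\<le>s \<and> s<length xs then 1 else 0)" by (simp add: C_def)
  ultimately show ?thesis using c1 c2 by (simp add: P_def)
qed

lemma slots_mid:
  assumes nd: "\<not> has_double_descent xs" and d: "distinct xs"
  shows "slots xs \<inter> {1..<length xs} = {1..<length xs} - peaks xs"
proof (rule set_eqI)
  fix s
  have neq: "\<And>i j. i < length xs \<Longrightarrow> j < length xs \<Longrightarrow> i \<noteq> j \<Longrightarrow> xs!i \<noteq> xs!j"
    using d by (simp add: nth_eq_iff_index_eq)
  show "s \<in> slots xs \<inter> {1..<length xs} \<longleftrightarrow> s \<in> {1..<length xs} - peaks xs"
  proof (cases "1 \<le> s \<and> s + 1 < length xs")
    case True
    have "\<not> (xs!(s-1) > xs!(s-1+1) \<and> xs!(s-1+1) > xs!(s-1+2))"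
      using nd True unfolding has_double_descent_def by (metis Suc_diff_le add_Suc add_Suc_shift diff_Suc_1 one_add_one plus_1_eq_Suc)
    moreover have "s-1+1 = s" "s-1+2 = s+1" using True by auto
    ultimately have "\<not> (xs!(s-1) > xs!s \<and> xs!s > xs!(s+1))" by simp
    moreover have "xs!(s-1) \<noteq> xs!s" "xs!s \<noteq> xs!(s+1)" using True neq by auto
    ultimately show ?thesis using True by (auto simp: slots_def peaks_def)
  next
    case False then show ?thesis by (auto simp: slots_def peaks_def)
  qed
qed

lemma RS_facts:
  assumes "xs \<in> RS n"
  shows "length xs = n" "\<forall>x\<in>set xs. x < n+1" "distinct xs" "\<not> has_double_descent xs"
    "\<forall>x\<in>set xs. 1 \<le> x"
proof -
  have p: "distinct xs" "set xs = {1..n}" using assms by (auto simp: RS_def is_perm_def)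
  then show "length xs = n" by (metis card_atLeastAtMost diff_Suc_1 distinct_card)
  show "\<forall>x\<in>set xs. x < n+1" "distinct xs" "\<forall>x\<in>set xs. 1 \<le> x" using p by auto
  show "\<not> has_double_descent xs"
  proof (cases "n = 0")
    case True then have "xs = []" using p by auto
    then show ?thesis by (simp add: has_double_descent_def)
  next
    case False
    then have "\<not> has_double_descent (filter (\<lambda>x. x \<le> n) xs)"
      using assms by (auto simp: RS_def simsun_def)
    moreover have "filter (\<lambda>x. x \<le> n) xs = xs" using p by (auto simp: filter_id_conv)
    ultimately show ?thesis by simp
  qed
qed

lemma RS_Suc_iff:
  assumes n: "n \<ge> 1"
  shows "ys \<in> RS (n+1) \<longleftrightarrow> (\<exists>xs s. xs \<in> RS n \<and> s \<in> slots xs \<and> ys = ins (n+1) s xs)"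
proof
  assume ys: "ys \<in> RS (n+1)"
  have p: "distinct ys" "set ys = {1..n+1}" using ys by (auto simp: RS_def is_perm_def)
  then have "n+1 \<in> set ys" by simp
  then obtain as bs where ab: "ys = as @ (n+1) # bs" by (meson split_list)
  define xs where "xs = as @ bs"
  define s where "s = length as"
  have yi: "ys = ins (n+1) s xs" by (simp add: ab xs_def s_def ins_def)
  have nin: "n+1 \<notin> set xs" using p(1) ab by (auto simp: xs_def)
  have dx: "distinct xs" using p(1) ab by (auto simp: xs_def)
  have "set xs = set ys - {n+1}" using nin yi by auto
  moreover have "{1..n+1} - {n+1} = {1..n}" by auto
  ultimately have sx: "set xs = {1..n}" using p(2) by simp
  have fk: "\<And>k. k \<le> n \<Longrightarrow> filter (\<lambda>x. x \<le> k) ys = filter (\<lambda>x. x \<le> k) xs"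
    using yi by (simp add: filter_ins)
  have ss: "simsun n xs" unfolding simsun_def
  proof
    fix k assume k: "k \<in> {1..n}"
    then have "\<not> has_double_descent (filter (\<lambda>x. x \<le> k) ys)"
      using ys by (auto simp: RS_def simsun_def)
    then show "\<not> has_double_descent (filter (\<lambda>x. x \<le> k) xs)" using fk k by simp
  qed
  have xr: "xs \<in> RS n" using dx sx ss by (simp add: RS_def is_perm_def)
  have "\<not> has_double_descent (filter (\<lambda>x. x \<le> n+1) ys)"
    using ys by (auto simp: RS_def simsun_def)
  moreover have "filter (\<lambda>x. x \<le> n+1) ys = ys" using p by (auto simp: filter_id_conv)
  ultimately have "\<not> has_double_descent ys" by simp
  moreover have sl: "s \<le> length xs" by (simp add: s_def xs_def)
  ultimately have nc: "\<not> (s+1 < length xs \<and> xs!s > xs!(s+1))"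
    using dd_ins[OF RS_facts(2)[OF xr] sl RS_facts(4)[OF xr]] yi by simp
  have "s+1 < length xs \<Longrightarrow> xs!s \<noteq> xs!(s+1)"
    using RS_facts(3)[OF xr] by (simp add: nth_eq_iff_index_eq)
  then have "s \<in> slots xs" using nc sl by (auto simp: slots_def)
  then show "\<exists>xs s. xs \<in> RS n \<and> s \<in> slots xs \<and> ys = ins (n+1) s xs" using xr yi by blast
next
  assume "\<exists>xs s. xs \<in> RS n \<and> s \<in> slots xs \<and> ys = ins (n+1) s xs"
  then obtain xs s where xr: "xs \<in> RS n" and s: "s \<in> slots xs" and yi: "ys = ins (n+1) s xs"
    by blast
  note f = RS_facts[OF xr]
  have sl: "s \<le> length xs" using s by (simp add: slots_def)
  have sx: "set xs = {1..n}" using xr by (simp add: RS_def is_perm_def)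
  have "distinct ys" using yi f distinct_ins by auto
  moreover have "set ys = {1..n+1}" using yi sx by auto
  moreover have "simsun (n+1) ys" unfolding simsun_def
  proof
    fix k assume k: "k \<in> {1..n+1}"
    show "\<not> has_double_descent (filter (\<lambda>x. x \<le> k) ys)"
    proof (cases "k \<le> n")
      case True
      then have "filter (\<lambda>x. x \<le> k) ys = filter (\<lambda>x. x \<le> k) xs" using yi by (simp add: filter_ins)
      moreover have "\<not> has_double_descent (filter (\<lambda>x. x \<le> k) xs)"
        using xr k True by (auto simp: RS_def simsun_def)
      ultimately show ?thesis by simp
    next
      case False
      then have "filter (\<lambda>x. x \<le> k) ys = ys" using \<open>set ys = _\<close> k by (auto simp: filter_id_conv)
      moreover have "\<not> has_double_descent ys"
        using dd_ins[OF f(2) sl f(4)] s yi by (auto simp: slots_def)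
      ultimately show ?thesis by simp
    qed
  qed
  ultimately show "ys \<in> RS (n+1)" by (simp add: RS_def is_perm_def)
qed

lemma finite_RS: "finite (RS n)"
proof (rule finite_subset)
  show "RS n \<subseteq> {xs. set xs \<subseteq> {1..n} \<and> length xs = n}"
    using RS_facts(1) by (auto simp: RS_def is_perm_def)
  show "finite {xs. set xs \<subseteq> {1..n} \<and> length xs = n}"
    by (rule finite_lists_length_eq) simp
qed

lemma finite_slots[simp]: "finite (slots xs)"
  by (rule finite_subset[of _ "{..length xs}"]) (auto simp: slots_def)

lemma ins_inj:
  assumes xr: "xs \<in> RS n" and xr': "xs' \<in> RS n" and s: "s \<in> slots xs" and s': "s' \<in> slots xs'"
    and eq: "ins (n+1) s xs = ins (n+1) s' xs'"
  shows "xs = xs' \<and> s = s'"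
proof -
  have "filter (\<lambda>x. x \<le> n) (ins (n+1) s xs) = xs"
    using RS_facts(2)[OF xr] by (auto simp: filter_ins filter_id_conv less_Suc_eq_le)
  moreover have "filter (\<lambda>x. x \<le> n) (ins (n+1) s' xs') = xs'"
    using RS_facts(2)[OF xr'] by (auto simp: filter_ins filter_id_conv less_Suc_eq_le)
  ultimately have x: "xs = xs'" using eq by simp
  have sl: "s \<le> length xs" "s' \<le> length xs" using s s' x by (auto simp: slots_def)
  have lt: "\<And>j. j < length xs \<Longrightarrow> xs!j < n+1" using RS_facts(2)[OF xr] by auto
  have "s = s'"
  proof (rule ccontr)
    assume ne: "s \<noteq> s'"
    have "ins (n+1) s xs ! s = n+1" using sl by (simp add: ins_nth)
    moreover have "ins (n+1) s' xs ! s = (if s < s' then xs!s else xs!(s-1))"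
      using sl ne by (simp add: ins_nth)
    moreover have "(if s < s' then xs!s else xs!(s-1)) < n+1"
      using sl ne lt[of s] lt[of "s-1"] by auto
    ultimately show False using eq x by simp
  qed
  then show ?thesis using x by simp
qed

lemma card_decomp:
  assumes n: "n \<ge> 1"
  shows "card {ys\<in>RS (n+1). Q ys} = (\<Sum>xs\<in>RS n. card {s\<in>slots xs. Q (ins (n+1) s xs)})"
proof -
  define f where "f = (\<lambda>(xs, s). ins (n+1) s xs)"
  define S where "S = (SIGMA xs:RS n. {s\<in>slots xs. Q (ins (n+1) s xs)})"
  have "{ys\<in>RS (n+1). Q ys} = f ` S"
    using RS_Suc_iff[OF n] by (auto simp: f_def S_def image_iff)
  moreover have "inj_on f S"
    using ins_inj by (fastforce simp: inj_on_def f_def S_def)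
  ultimately have "card {ys\<in>RS (n+1). Q ys} = card S" by (simp add: card_image)
  also have "\<dots> = (\<Sum>xs\<in>RS n. card {s\<in>slots xs. Q (ins (n+1) s xs)})"
    unfolding S_def by (rule card_SigmaI) (auto simp: finite_RS)
  finally show ?thesis .
qed

lemma sign_ins:
  assumes "length xs \<ge> 2" "s \<le> length xs" "\<forall>x\<in>set xs. x < N"
  shows "(ins N s xs ! 0 > ins N s xs ! 1) \<longleftrightarrow> (if s = 0 then True else if s = 1 then False else xs!0 > xs!1)"
proof -
  have "xs!0 \<in> set xs" "xs!1 \<in> set xs" using assms(1) by (auto intro!: nth_mem)
  then have "xs!0 < N" "xs!1 < N" using assms by auto
  then show ?thesis using assms by (auto simp: ins_nth)
qed

lemma count_pieces:
  fixes b :: bool and k :: int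
  assumes xr: "xs \<in> RS n" and n: "n \<ge> 2"
  defines "sp \<equiv> xs!0 > xs!1"
  defines "m \<equiv> pk xs"
  defines "R \<equiv> (\<lambda>s. (ins (n+1) s xs ! 0 > ins (n+1) s xs ! 1) = b \<and> int (pk (ins (n+1) s xs)) = k)"
  shows "int (card {s\<in>slots xs. R s}) =
    (if b then (if sp then (if int m = k then k+1 else 0) + (if int m + 1 = k then int n - 2*k else 0)
                else (if int m = k then 1 else 0))
     else (if sp then (if int m + 1 = k then 1 else 0)
           else (if int m = k then k+1 else 0) + (if int m + 1 = k then int n - 2*k + 1 else 0)))"
proof -
  note f = RS_facts[OF xr]
  define P where "P = peaks xs"
  define Z where "Z = slots xs \<inter> {0}"
  define K where "K = Suc ` P"
  define I where "I = ({1..<n} - P) - Suc ` P"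
  have len: "length xs = n" using f by simp
  have neq: "\<And>i j. i < n \<Longrightarrow> j < n \<Longrightarrow> i \<noteq> j \<Longrightarrow> xs!i \<noteq> xs!j"
    using f(3) len by (simp add: nth_eq_iff_index_eq)
  have Pn: "P \<subseteq> {1..<n}" using len by (auto simp: P_def peaks_def)
  have KP: "K \<subseteq> {1..<n} - P"
  proof
    fix x assume "x \<in> K"
    then obtain j where j: "j \<in> P" "x = Suc j" by (auto simp: K_def)
    then show "x \<in> {1..<n} - P" using len by (auto simp: P_def peaks_def)
  qed
  have mid: "slots xs \<inter> {1..<n} = {1..<n} - P"
    using slots_mid[OF f(4) f(3)] len by (simp add: P_def)
  have sl: "slots xs = Z \<union> K \<union> I \<union> {n}"
  proof -
    have "slots xs \<subseteq> {..n}" using len by (auto simp: slots_def)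
    then have "slots xs = Z \<union> (slots xs \<inter> {1..<n}) \<union> (slots xs \<inter> {n})"
      by (auto simp: Z_def)
    moreover have "n \<in> slots xs" using len by (simp add: slots_def)
    moreover have Ia: "I = ({1..<n} - P) - K" by (simp add: I_def K_def)
    ultimately show ?thesis using mid KP by auto
  qed
  have fin: "finite Z" "finite K" "finite I" by (auto simp: Z_def K_def I_def P_def)
  have dis: "Z \<inter> K = {}" "(Z \<union> K) \<inter> I = {}" "(Z \<union> K \<union> I) \<inter> {n} = {}"
    using KP n by (auto simp: Z_def I_def K_def)
  have csplit: "card {s\<in>slots xs. R s} = card {s\<in>Z. R s} + card {s\<in>K. R s} + card {s\<in>I. R s}
       + (if R n then 1 else 0)"
  proof -
    have "{s\<in>slots xs. R s} = {s\<in>Z. R s} \<union> {s\<in>K. R s} \<union> {s\<in>I. R s} \<union> {s\<in>{n}. R s}"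
      using sl by auto
    moreover have "{s\<in>{n}. R s} = (if R n then {n} else {})" by auto
    then have "card {s\<in>{n}. R s} = (if R n then 1 else 0)" by simp
    ultimately show ?thesis using fin dis
      by (simp add: card_Un_disjoint disjoint_iff)
  qed
  have lt: "\<forall>x\<in>set xs. x < n+1" using f by simp
  have sgn: "\<And>s. s \<le> n \<Longrightarrow> (ins (n+1) s xs ! 0 > ins (n+1) s xs ! 1) \<longleftrightarrow>
       (if s = 0 then True else if s = 1 then False else sp)"
    using sign_ins[of xs _ "n+1"] len n lt by (simp add: sp_def)
  have pki: "\<And>s. s \<in> slots xs \<Longrightarrow> int (pk (ins (n+1) s xs)) =
      int m + (if 1\<le>s \<and> s<n then 1 else 0) - (if 1\<le>s \<and> s-1 \<in> P then 1 else 0)"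
  proof -
    fix s assume "s \<in> slots xs"
    from pk_ins[OF lt this] show "?thesis s" using len by (auto simp: m_def P_def split: if_splits)
  qed
  have slZ: "0 \<in> slots xs \<longleftrightarrow> \<not> sp"
    using neq[of 0 1] n len by (auto simp: slots_def sp_def)
  have cZ: "card {s\<in>Z. R s} = (if \<not> sp \<and> b \<and> int m = k then 1 else 0)"
  proof -
    have "0 \<in> slots xs \<Longrightarrow> R 0 \<longleftrightarrow> b \<and> int m = k"
      using sgn[of 0] pki[of 0] by (simp add: R_def)
    then have "{s\<in>Z. R s} = (if \<not> sp \<and> b \<and> int m = k then {0} else {})"
      using slZ by (auto simp: Z_def)
    then show ?thesis by simp
  qed
  have cK: "card {s\<in>K. R s} = (if sp = b \<and> int m = k then m else 0)"
  proof -
    have "\<And>s. s \<in> K \<Longrightarrow> R s \<longleftrightarrow> sp = b \<and> int m = k"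
    proof -
      fix s assume s: "s \<in> K"
      then have s1: "s \<in> slots xs" "2 \<le> s" "s < n" "s - 1 \<in> P"
        using KP mid by (auto simp: K_def P_def peaks_def)
      show "R s \<longleftrightarrow> sp = b \<and> int m = k"
        using sgn[of s] pki[OF s1(1)] s1 by (auto simp: R_def)
    qed
    then have "{s\<in>K. R s} = (if sp = b \<and> int m = k then K else {})" by auto
    moreover have "card K = m" unfolding K_def m_def pk_peaks P_def by (simp add: card_image)
    ultimately show ?thesis by simp
  qed
  have cN: "R n \<longleftrightarrow> sp = b \<and> int m = k"
  proof -
    have "n \<in> slots xs" "n - 1 \<notin> P" using len by (auto simp: slots_def P_def peaks_def)
    then show ?thesis using sgn[of n] pki[of n] n by (auto simp: R_def)
  qed
  have Ivals: "\<And>s. s \<in> I \<Longrightarrow> R s \<longleftrightarrow> (s \<noteq> 1 \<and> sp) = b \<and> int m + 1 = k"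
  proof -
    fix s assume s: "s \<in> I"
    then have s1: "s \<in> slots xs" "1 \<le> s" "s < n" "s - 1 \<notin> P"
      using mid unfolding I_def by (auto simp: image_iff)
    show "R s \<longleftrightarrow> (s \<noteq> 1 \<and> sp) = b \<and> int m + 1 = k"
      using sgn[of s] pki[OF s1(1)] s1 by (auto simp: R_def)
  qed
  have cardI: "int (card I) = int n - 1 - 2 * int m"
  proof -
    have "card ({1..<n} - P) = (n - 1) - m" using Pn by (simp add: card_Diff_subset m_def pk_peaks P_def)
    moreover have "card (Suc ` P) = m" by (simp add: card_image m_def pk_peaks P_def)
    moreover have "card I = card ({1..<n} - P) - card (Suc ` P)"
      unfolding I_def using KP by (simp add: card_Diff_subset K_def P_def)
    moreover have "m \<le> n - 1" using card_mono[OF _ Pn] by (simp add: m_def pk_peaks P_def)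
    moreover have "card (Suc ` P) \<le> card ({1..<n} - P)" using KP by (simp add: card_mono K_def)
    ultimately show ?thesis using n by simp
  qed
  have oneI: "sp \<Longrightarrow> 1 \<in> I"
  proof -
    assume sp
    have d: "\<forall>i. i + 2 < length xs \<longrightarrow> \<not> (xs!i > xs!(i+1) \<and> xs!(i+1) > xs!(i+2))"
      using f(4) unfolding has_double_descent_def by blast
    have a: "2 < n \<Longrightarrow> xs!1 < xs!2"
    proof -
      assume "2 < n"
      have "1 < n" "(2::nat) < n" "(1::nat) \<noteq> 2" using \<open>2 < n\<close> by auto
      then have "xs!1 \<noteq> xs!2" by (rule neq)
      moreover have "\<not> (xs!0 > xs!1 \<and> xs!1 > xs!2)" using d[rule_format, of 0] \<open>2 < n\<close> len by (simp add: numeral_2_eq_2)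
      ultimately show ?thesis using \<open>sp\<close> unfolding sp_def by auto
    qed
    have "1 \<in> slots xs" unfolding slots_def one_add_one using len n a by (simp add: numeral_2_eq_2)
    moreover have "0 \<notin> P" by (simp add: P_def peaks_def)
    moreover have "1 \<notin> P" using slot_not_peak[OF \<open>1 \<in> slots xs\<close>] by (simp add: P_def)
    moreover have "1 \<notin> Suc ` P"
    proof
      assume "1 \<in> Suc ` P"
      then obtain x where "x \<in> P" "1 = Suc x" by auto
      then show False using \<open>0 \<notin> P\<close> by simp
    qed
    moreover have "1 \<in> {1..<n}" using n by simp
    ultimately show "1 \<in> I" unfolding I_def by blast
  qed
  have cI: "int (card {s\<in>I. R s}) = (if int m + 1 = k then (if sp then (if b then int n - 2 - 2*int m else 1)
        else (if b then 0 else int n - 1 - 2*int m)) else 0)"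
  proof (cases "int m + 1 = k")
    case False
    then have "{s\<in>I. R s} = {}" using Ivals by auto
    then have "card {s\<in>I. R s} = 0" by (simp only: card.empty)
    then show ?thesis using False by simp
  next
    case True
    show ?thesis
    proof (cases sp)
      case True
      then have "1 \<in> I" by (rule oneI)
      show ?thesis
      proof (cases b)
        case b: True
        then have "{s\<in>I. R s} = I - {1}" using Ivals \<open>int m + 1 = k\<close> True by auto
        moreover have "card I > 0" using \<open>1 \<in> I\<close> fin(3) card_gt_0_iff by blast
        ultimately show ?thesis using \<open>1 \<in> I\<close> fin cardI b True \<open>int m + 1 = k\<close>
          by (simp add: of_nat_diff)
      next
        case b: False
        then have "{s\<in>I. R s} = {1}" using Ivals \<open>int m + 1 = k\<close> True \<open>1 \<in> I\<close> by auto
        then show ?thesis using b True \<open>int m + 1 = k\<close> by simp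
      qed
    next
      case False
      then have "{s\<in>I. R s} = (if b then {} else I)" using Ivals \<open>int m + 1 = k\<close> by auto
      then show ?thesis using False cardI \<open>int m + 1 = k\<close> by simp
    qed
  qed
  show ?thesis
    using csplit cZ cK cN cI by (cases b; cases sp) (auto simp: algebra_simps)
qed


lemma sum_ind: "finite A \<Longrightarrow> (\<Sum>x\<in>A. if P x then (c::int) else 0) = c * int (card {x\<in>A. P x})"
  by (simp add: sum.inter_filter[symmetric])

lemma RS_split:
  assumes n: "n \<ge> 2"
  shows "RS n = RS_plus n \<union> RS_minus n" "RS_plus n \<inter> RS_minus n = {}"
proof -
  have "\<And>xs. xs \<in> RS n \<Longrightarrow> xs!0 \<noteq> xs!1"
  proof -
    fix xs assume xr: "xs \<in> RS n"
    have "0 < length xs" "1 < length xs" using RS_facts(1)[OF xr] n by auto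
    then show "xs!0 \<noteq> xs!1" using RS_facts(3)[OF xr] by (simp add: nth_eq_iff_index_eq)
  qed
  then show "RS n = RS_plus n \<union> RS_minus n"
    by (auto simp: RS_plus_def RS_minus_def) (meson linorder_neqE_nat)
  show "RS_plus n \<inter> RS_minus n = {}" by (auto simp: RS_plus_def RS_minus_def)
qed

lemma count_rec:
  fixes k :: int and b :: bool
  assumes n: "n \<ge> 2"
  shows "int (card {ys\<in>RS (n+1). (ys!0 > ys!1) = b \<and> int (pk ys) = k}) =
    (if b then (k+1) * Pplus n k + (int n - 2*k) * Pplus n (k-1) + Pminus n k
     else (k+1) * Pminus n k + (int n - 2*k + 1) * Pminus n (k-1) + Pplus n (k-1))"
proof -
  define A where "A = (\<lambda>xs. (if b then (if int (pk xs) = k then k+1 else 0) + (if int (pk xs) + 1 = k then int n - 2*k else 0)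
                else (if int (pk xs) + 1 = k then 1 else 0)))"
  define B where "B = (\<lambda>xs. (if b then (if int (pk xs) = k then 1 else 0)
     else (if int (pk xs) = k then k+1 else 0) + (if int (pk xs) + 1 = k then int n - 2*k + 1 else 0)))"
  have fp: "finite (RS_plus n)" "finite (RS_minus n)" using finite_RS
    by (auto simp: RS_plus_def RS_minus_def)
  have "int (card {ys\<in>RS (n+1). (ys!0 > ys!1) = b \<and> int (pk ys) = k})
     = (\<Sum>xs\<in>RS n. int (card {s\<in>slots xs. (ins (n+1) s xs!0 > ins (n+1) s xs!1) = b \<and> int (pk (ins (n+1) s xs)) = k}))"
    using card_decomp[of n "\<lambda>ys. (ys!0 > ys!1) = b \<and> int (pk ys) = k"] n by simp
  also have "\<dots> = (\<Sum>xs\<in>RS n. if xs!0 > xs!1 then A xs else B xs)"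
  proof (rule sum.cong)
    fix xs assume "xs \<in> RS n"
    from count_pieces[OF this n, of b k]
    show "int (card {s\<in>slots xs. (ins (n+1) s xs!0 > ins (n+1) s xs!1) = b \<and> int (pk (ins (n+1) s xs)) = k})
      = (if xs!0 > xs!1 then A xs else B xs)" by (simp add: A_def B_def)
  qed simp
  also have "\<dots> = (\<Sum>xs\<in>RS_plus n. if xs!0 > xs!1 then A xs else B xs) + (\<Sum>xs\<in>RS_minus n. if xs!0 > xs!1 then A xs else B xs)"
    using RS_split[OF n] fp by (simp add: sum.union_disjoint)
  also have "\<dots> = (\<Sum>xs\<in>RS_plus n. A xs) + (\<Sum>xs\<in>RS_minus n. B xs)"
    by (simp add: RS_plus_def RS_minus_def)
  also have "\<dots> = (if b then (k+1) * Pplus n k + (int n - 2*k) * Pplus n (k-1) + Pminus n k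
     else (k+1) * Pminus n k + (int n - 2*k + 1) * Pminus n (k-1) + Pplus n (k-1))"
  proof -
    have e1: "\<And>X. {x \<in> X. int (pk x) + 1 = k} = {x \<in> X. int (pk x) = k - 1}" by auto
    show ?thesis
      by (cases b) (simp_all add: A_def B_def sum.distrib sum_ind fp Pplus_def Pminus_def e1)
  qed
  finally show ?thesis .
qed

lemma P_zero:
  assumes "k < 0 \<or> k > int n"
  shows "Pplus n k = 0" "Pminus n k = 0"
proof -
  have "\<And>xs. xs \<in> RS n \<Longrightarrow> pk xs \<le> n"
  proof -
    fix xs assume xr: "xs \<in> RS n"
    have "peaks xs \<subseteq> {..<n}" using RS_facts(1)[OF xr] by (auto simp: peaks_def)
    then show "pk xs \<le> n" unfolding pk_peaks using card_mono[of "{..<n}" "peaks xs"] by simp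
  qed
  then have e: "{xs \<in> RS_plus n. int (pk xs) = k} = {}" "{xs \<in> RS_minus n. int (pk xs) = k} = {}"
    using assms by (force simp: RS_plus_def RS_minus_def)+
  show "Pplus n k = 0" "Pminus n k = 0" unfolding Pplus_def Pminus_def by (simp_all only: e card.empty of_nat_0)
qed

lemma coeff_Pplus_poly: "coeff (Pplus_poly n) i = Pplus n (int i)"
  using P_zero(1)[of "int i" n] by (auto simp: Pplus_poly_def coeff_sum)

lemma coeff_Pminus_poly: "coeff (Pminus_poly n) i = Pminus n (int i)"
  using P_zero(2)[of "int i" n] by (auto simp: Pminus_poly_def coeff_sum)

lemma coeff_lin: fixes p :: "int poly" shows "coeff ([:a, b:] * p) i = a * coeff p i + (if i = 0 then 0 else b * coeff p (i-1))"
  by (cases i) (simp_all add: algebra_simps)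

lemma coeff_quad: fixes q :: "int poly" shows "coeff ([:0, 1, c:] * q) i =
   (if i = 0 then 0 else coeff q (i-1) + (if i = 1 then 0 else c * coeff q (i-2)))"
  by (cases i; cases "i - 1") (simp_all add: algebra_simps)

lemma coeff_dq0: fixes p :: "int poly" shows "coeff ([:0, 1, -2:] * pderiv p) 0 = 0"
  by (simp add: coeff_quad)

lemma coeff_dq: fixes p :: "int poly"
  shows "coeff ([:0, 1, -2:] * pderiv p) (Suc j) = int (Suc j) * coeff p (Suc j) - 2 * int j * coeff p j"
  by (cases j) (simp_all add: coeff_quad coeff_pderiv algebra_simps)

lemma RS_neq: "n \<ge> 2 \<Longrightarrow> xs \<in> RS n \<Longrightarrow> xs!0 \<noteq> xs!1"
proof -
  assume n: "n \<ge> 2" and xr: "xs \<in> RS n"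
  have "0 < length xs" "1 < length xs" using RS_facts(1)[OF xr] n by auto
  then show "xs!0 \<noteq> xs!1" using RS_facts(3)[OF xr] by (simp add: nth_eq_iff_index_eq)
qed

theorem lemma4:
  fixes n :: nat
  assumes "n \<ge> 2"
  shows "(\<forall>k::int.
            Pplus (n+1) k = (k+1) * Pplus n k + (int n - 2*k) * Pplus n (k-1) + Pminus n k \<and>
            Pminus (n+1) k = (k+1) * Pminus n k + (int n - 2*k + 1) * Pminus n (k-1) + Pplus n (k-1))
         \<and> Pplus_poly (n+1) = [:1, int n - 2:] * Pplus_poly n
              + [:0, 1, -2:] * pderiv (Pplus_poly n) + Pminus_poly n
         \<and> Pminus_poly (n+1) = [:1, int n - 1:] * Pminus_poly n
              + [:0, 1, -2:] * pderiv (Pminus_poly n) + [:0, 1:] * Pplus_poly n"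
proof -
  have Pp: "Pplus (n+1) k = int (card {ys\<in>RS (n+1). (ys!0>ys!1) = True \<and> int (pk ys) = k})" for k
  proof -
    have "{xs \<in> RS_plus (n+1). int (pk xs) = k} = {ys\<in>RS (n+1). (ys!0>ys!1) = True \<and> int (pk ys) = k}"
      by (auto simp: RS_plus_def)
    then show ?thesis by (simp add: Pplus_def)
  qed
  have Pm: "Pminus (n+1) k = int (card {ys\<in>RS (n+1). (ys!0>ys!1) = False \<and> int (pk ys) = k})" for k
  proof -
    have "{xs \<in> RS_minus (n+1). int (pk xs) = k} = {ys\<in>RS (n+1). (ys!0>ys!1) = False \<and> int (pk ys) = k}"
      using RS_neq[of "n+1"] assms by (auto simp: RS_minus_def) (metis linorder_neqE_nat)
    then show ?thesis by (simp add: Pminus_def)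
  qed
  have rec: "\<forall>k::int.
            Pplus (n+1) k = (k+1) * Pplus n k + (int n - 2*k) * Pplus n (k-1) + Pminus n k \<and>
            Pminus (n+1) k = (k+1) * Pminus n k + (int n - 2*k + 1) * Pminus n (k-1) + Pplus n (k-1)"
    using count_rec[OF assms, where b=True] count_rec[OF assms, where b=False] Pp Pm by simp
  have z: "Pplus n (-1) = 0" "Pminus n (-1) = 0" using P_zero[of "-1" n] by auto
  have e: "\<And>j. int (Suc j) - 1 = int j" by simp
  have p1: "Pplus_poly (n+1) = [:1, int n - 2:] * Pplus_poly n
              + [:0, 1, -2:] * pderiv (Pplus_poly n) + Pminus_poly n"
  proof (rule poly_eqI)
    fix i show "coeff (Pplus_poly (n+1)) i = coeff ([:1, int n - 2:] * Pplus_poly n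
              + [:0, 1, -2:] * pderiv (Pplus_poly n) + Pminus_poly n) i"
    proof (cases i)
      case 0 show ?thesis using rec z
        unfolding 0 coeff_add coeff_lin coeff_dq0 coeff_Pplus_poly coeff_Pminus_poly by simp
    next
      case (Suc j)
      have "Pplus (n+1) (int (Suc j)) = (int (Suc j)+1) * Pplus n (int (Suc j)) + (int n - 2*int (Suc j)) * Pplus n (int j) + Pminus n (int (Suc j))"
        using rec e by metis
      then show ?thesis
        unfolding Suc coeff_add coeff_lin coeff_dq coeff_Pplus_poly coeff_Pminus_poly
        by (simp add: algebra_simps)
    qed
  qed
  have p2: "Pminus_poly (n+1) = [:1, int n - 1:] * Pminus_poly n
              + [:0, 1, -2:] * pderiv (Pminus_poly n) + [:0, 1:] * Pplus_poly n"
  proof (rule poly_eqI)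
    fix i show "coeff (Pminus_poly (n+1)) i = coeff ([:1, int n - 1:] * Pminus_poly n
              + [:0, 1, -2:] * pderiv (Pminus_poly n) + [:0, 1:] * Pplus_poly n) i"
    proof (cases i)
      case 0 show ?thesis using rec z
        unfolding 0 coeff_add coeff_lin coeff_dq0 coeff_Pplus_poly coeff_Pminus_poly by simp
    next
      case (Suc j)
      have "Pminus (n+1) (int (Suc j)) = (int (Suc j)+1) * Pminus n (int (Suc j)) + (int n - 2*int (Suc j) + 1) * Pminus n (int j) + Pplus n (int j)"
        using rec e by metis
      then show ?thesis
        unfolding Suc coeff_add coeff_lin coeff_dq coeff_Pplus_poly coeff_Pminus_poly
        by (simp add: algebra_simps)
    qed
  qed
  show ?thesis using rec p1 p2 by blast
qed

end
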